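(* $\mathtt{Trellis}\subseteq\mathtt{incl}$-$\mathtt{ESO}$-$\mathtt{HORN}$.
   Context: Fix a finite alphabet $\Sigma$. A nonempty word $w=w_1\cdots w_n$ is represented by the structure $\langle w\rangle=([1,n];(Q_s)_{s\in\Sigma},\mathtt{min},\mathtt{max},\mathtt{suc},\mathtt{pred})$ with $Q_s(i)\iff w_i=s$, $\mathtt{min}(i)\iff i=1$, $\mathtt{max}(i)\iff i=n$, $\mathtt{suc}(i)=\min(i+1,n)$, $\mathtt{pred}(i)=\max(i-1,1)$. For an integer $a$, $x+a$ denotes $\mathtt{suc}^a(x)$ if $a\ge0$ and $\mathtt{pred}^{-a}(x)$ if $a<0$; $y-b=\mathtt{pred}^b(y)$. An inclusion Horn formula is $\Phi=\exists\mathbf{R}\forall x\forall y\,\psi(x,y)$, $\mathbf{R}$ a finite set of binary relation symbols, $\psi$ a conjunction of Horn clauses over $\{(Q_s)_{s\in\Sigma},\mathtt{min},\mathtt{max},\mathtt{suc},\mathtt{pred}\}\cup\mathbf{R}\cup\{=,\le,<\}$, each of the form $x\le y\wedge\delta_1\wedge\cdots\wedge\delta_r\to\delta_0$ with $\delta_0$ an atom $R(x,y)$ ($R\in\mathbf{R}$) or $\bot$, each $\delta_i$ one of: $U(x+a)$, $\neg U(x+a)$, $U(y+a)$, $\neg U(y+a)$ for $U\in\{(Q_s)_{s\in\Sigma},\mathtt{min},\mathtt{max}\}$, $a\in\mathbb Z$; $x=y$ or $x<y$; $S(x+a,y-b)\wedge x+a\le y-b$ with $S\in\mathbf{R}$,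 $a,b\ge0$. $\mathtt{incl}$-$\mathtt{ESO}$-$\mathtt{HORN}$ is the class of languages $\{w\in\Sigma^+:\langle w\rangle\models\Phi\}$. A one-way cellular automaton (OCA) is $(Q,\Sigma,Q_{accept},\{-1,0\},\delta)$ with finite $Q\supseteq\Sigma$, $Q_{accept}\subseteq Q$, $\delta:Q^2\to Q$; on input $w=w_1\cdots w_n$ it uses cells $1,\dots,n$ (cells outside permanently in a state $\sharp$), with $\langle c,1\rangle=w_c$ and $\langle c,t\rangle=\delta(\langle c-1,t-1\rangle,\langle c,t-1\rangle)$ for $t>1$. $\mathtt{Trellis}$ is the class of languages $L\subseteq\Sigma^+$ such that some OCA satisfies $w\in L\iff\langle n,n\rangle\in Q_{accept}$ for all $w$ of length $n$ (equivalently, languages accepted by trellis automata). *)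

theory Defs
  imports Main
begin

(* Words over a finite alphabet 'a are lists; positions are 1..n (as ints). *)

datatype var = VX | VY

datatype 'a upred = UQ 'a | UMin | UMax

(* body atoms of a Horn clause:
   HUn pol U v a   :  U(v+a) if pol, \<not>U(v+a) otherwise
   HEq             :  x = y
   HLess           :  x < y
   HRel S a b      :  S(x+a, y-b) \<and> x+a \<le> y-b   (a, b \<ge> 0)
   relation symbols are indexed by nat *)
datatype 'a hatom = HUn bool "'a upred" var int | HEq | HLess | HRel nat nat nat

datatype hhead = HdRel nat | HdBot

(* a clause is (body, head); the premise x \<le> y is implicit;
   a formula is a finite conjunction (list) of clauses *)
type_synonym 'a hclause = "'a hatom list \<times> hhead"
type_synonym 'a hformula = "'a hclause list"

(* x + a in <w> of length n: suc^a / pred^(-a), saturating at n / 1 *)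
definition shift :: "int \<Rightarrow> int \<Rightarrow> int \<Rightarrow> int" where
  "shift n i a = (if a \<ge> 0 then min (i + a) n else max (i + a) 1)"

fun upred_holds :: "'a list \<Rightarrow> 'a upred \<Rightarrow> int \<Rightarrow> bool" where
  "upred_holds w (UQ s) i = (w ! nat (i - 1) = s)"
| "upred_holds w UMin i = (i = 1)"
| "upred_holds w UMax i = (i = int (length w))"

fun hatom_holds :: "'a list \<Rightarrow> (nat \<Rightarrow> int \<Rightarrow> int \<Rightarrow> bool) \<Rightarrow> int \<Rightarrow> int \<Rightarrow> 'a hatom \<Rightarrow> bool" where
  "hatom_holds w Rs x y (HUn pol U v a) =
     (upred_holds w U (shift (int (length w)) (if v = VX then x else y) a) = pol)"
| "hatom_holds w Rs x y HEq = (x = y)"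
| "hatom_holds w Rs x y HLess = (x < y)"
| "hatom_holds w Rs x y (HRel S a b) =
     (let p = shift (int (length w)) x (int a); q = shift (int (length w)) y (- int b)
      in Rs S p q \<and> p \<le> q)"

fun hhead_holds :: "(nat \<Rightarrow> int \<Rightarrow> int \<Rightarrow> bool) \<Rightarrow> int \<Rightarrow> int \<Rightarrow> hhead \<Rightarrow> bool" where
  "hhead_holds Rs x y (HdRel R) = Rs R x y"
| "hhead_holds Rs x y HdBot = False"

definition hmodels :: "'a list \<Rightarrow> 'a hformula \<Rightarrow> bool" where
  "hmodels w \<Phi> = (\<exists>Rs. \<forall>x y. 1 \<le> x \<longrightarrow> x \<le> y \<longrightarrow> y \<le> int (length w) \<longrightarrow>
      (\<forall>(body, hd) \<in> set \<Phi>. (\<forall>d \<in> set body. hatom_holds w Rs x y d) \<longrightarrow> hhead_holds Rs x y hd))"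

definition incl_ESO_HORN :: "'a list set set" where
  "incl_ESO_HORN = {L. \<exists>\<Phi>. L = {w. w \<noteq> [] \<and> hmodels w \<Phi>}}"

(* states live in 'a + nat; input letters are the states Inl s;
   the boundary state \<sharp> is Inr 0 *)
definition sharp :: "'a + nat" where "sharp = Inr 0"

(* oca_state \<delta> w c t = state of cell c at time t+1; cell 0 is the boundary *)
fun oca_state :: "('a + nat \<Rightarrow> 'a + nat \<Rightarrow> 'a + nat) \<Rightarrow> 'a list \<Rightarrow> nat \<Rightarrow> nat \<Rightarrow> 'a + nat" where
  "oca_state \<delta> w c 0 = (if c = 0 then sharp else Inl (w ! (c - 1)))"
| "oca_state \<delta> w c (Suc t) =
     (if c = 0 then sharp else \<delta> (oca_state \<delta> w (c - 1) t) (oca_state \<delta> w c t))"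

definition Trellis :: "'a list set set" where
  "Trellis = {L. L \<subseteq> {w. w \<noteq> []} \<and>
     (\<exists>(Q :: ('a + nat) set) Qacc \<delta>. finite Q \<and> range Inl \<subseteq> Q \<and> Qacc \<subseteq> Q \<and>
        (\<forall>p \<in> insert sharp Q. \<forall>q \<in> Q. \<delta> p q \<in> Q) \<and>
        (\<forall>w. w \<noteq> [] \<longrightarrow> (w \<in> L \<longleftrightarrow> oca_state \<delta> w (length w) (length w - 1) \<in> Qacc)))}"

end

theory Submission
  imports Defs "HOL-Library.Countable"
begin

lemma oca_in_Q:
  assumes "range Inl \<subseteq> Q" "\<forall>p \<in> insert sharp Q. \<forall>q \<in> Q. \<delta> p q \<in> Q" "c \<ge> 1"
  shows "oca_state \<delta> w c t \<in> Q"
  using assms(3)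
proof (induction t arbitrary: c)
  case 0
  then show ?case using assms(1) by auto
next
  case (Suc t)
  have "oca_state \<delta> w (c - 1) t \<in> insert sharp Q"
  proof (cases "c - 1 = 0")
    case True
    then show ?thesis by (cases t) auto
  next
    case False
    then show ?thesis using Suc.IH[of "c - 1"] by auto
  qed
  then show ?case using Suc assms(2) by auto
qed

lemma oca_step:
  assumes "1 \<le> x" "x < y"
  shows "oca_state \<delta> w y (y - x) =
     \<delta> (oca_state \<delta> w (y - 1) (y - 1 - x)) (oca_state \<delta> w y (y - Suc x))"
proof -
  have "y - x = Suc (y - Suc x)" using assms by auto
  moreover have "y - 1 - x = y - Suc x" by auto
  ultimately show ?thesis using assms by simp
qed

lemma shift_simps:
  "0 \<le> i \<Longrightarrow> i \<le> n \<Longrightarrow> shift n i 0 = i"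
  "1 \<le> i \<Longrightarrow> shift n i (- 1) = max (i - 1) 1"
  "i + 1 \<le> n \<Longrightarrow> shift n i 1 = i + 1"
  by (auto simp: shift_def)

theorem lemma9:
  shows "(Trellis :: ('a::finite) list set set) \<subseteq> incl_ESO_HORN"
proof
  fix L :: "'a list set"
  assume "L \<in> Trellis"
  then obtain Q Qacc \<delta> where L1: "L \<subseteq> {w. w \<noteq> []}" and Qf: "finite (Q :: ('a + nat) set)"
    and QI: "range Inl \<subseteq> Q" and Qa: "Qacc \<subseteq> Q"
    and Qd: "\<forall>p \<in> insert sharp Q. \<forall>q \<in> Q. \<delta> p q \<in> Q"
    and Lw: "\<forall>w. w \<noteq> [] \<longrightarrow> (w \<in> L \<longleftrightarrow> oca_state \<delta> w (length w) (length w - 1) \<in> Qacc)"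
    unfolding Trellis_def by blast
  obtain qs where qs: "set qs = Q" using Qf finite_list by blast
  obtain as where as: "set as = (UNIV :: 'a set)" using finite_list finite_UNIV by blast
  define C1 :: "'a hformula" where
    "C1 = map (\<lambda>s. ([HEq, HUn True (UQ s) VX 0], HdRel (to_nat (Inl s :: 'a + nat)))) as"
  define C2 :: "'a hformula" where
    "C2 = concat (map (\<lambda>p. map (\<lambda>q. ([HLess, HRel (to_nat p) 0 1, HRel (to_nat q) 1 0],
            HdRel (to_nat (\<delta> p q)))) qs) qs)"
  define C3 :: "'a hformula" where
    "C3 = map (\<lambda>q. ([HUn True UMin VX 0, HUn True UMax VY 0, HRel (to_nat q) 0 0], HdBot))
            (filter (\<lambda>q. q \<notin> Qacc) qs)"
  define \<Phi> where "\<Phi> = C1 @ C2 @ C3"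
  have "L = {w. w \<noteq> [] \<and> hmodels w \<Phi>}"
  proof (intro set_eqI iffI)
    fix w assume wL: "w \<in> L"
    then have wne: "w \<noteq> []" using L1 by auto
    have acc: "oca_state \<delta> w (length w) (length w - 1) \<in> Qacc" using Lw wne wL by auto
    define n where "n = int (length w)"
    define T where "T x y = oca_state \<delta> w (nat y) (nat (y - x))" for x y :: int
    define Rs where "Rs k x y = (1 \<le> x \<and> x \<le> y \<and> y \<le> n \<and> k = to_nat (T x y))" for k x y
    have "hmodels w \<Phi>"
      unfolding hmodels_def
    proof (intro exI[of _ Rs] allI impI ballI)
      fix x y :: int and c
      assume xy: "1 \<le> x" "x \<le> y" "y \<le> int (length w)" and c: "c \<in> set \<Phi>"
      obtain body hd where c_eq: "c = (body, hd)" by fastforce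
      show "case c of (body, hd) \<Rightarrow> (\<forall>d \<in> set body. hatom_holds w Rs x y d) \<longrightarrow> hhead_holds Rs x y hd"
        unfolding c_eq prod.case
      proof (intro impI)
        assume B: "\<forall>d \<in> set body. hatom_holds w Rs x y d"
        consider "(body, hd) \<in> set C1" | "(body, hd) \<in> set C2" | "(body, hd) \<in> set C3"
          using c c_eq \<Phi>_def by auto
        then show "hhead_holds Rs x y hd"
        proof cases
          case 1
          then obtain s where s: "body = [HEq, HUn True (UQ s) VX 0]"
            "hd = HdRel (to_nat (Inl s :: 'a + nat))" unfolding C1_def by auto
          have "x = y" "w ! nat (x - 1) = s" using B xy s(1) by (auto simp: shift_def)
          moreover have "nat y - 1 = nat (x - 1)" using \<open>x = y\<close> xy by auto
          ultimately show ?thesis using s(2) xy by (simp add: Rs_def T_def n_def)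
        next
          case 2
          then obtain p q where pq: "p \<in> Q" "q \<in> Q"
            "body = [HLess, HRel (to_nat p) 0 1, HRel (to_nat q) 1 0]"
            "hd = HdRel (to_nat (\<delta> p q))" unfolding C2_def using qs by auto
          have lt: "x < y" using B pq(3) by auto
          have h1: "Rs (to_nat p) x (y - 1)"
            using B pq(3) xy lt by (auto simp: shift_def Let_def)
          have h2: "Rs (to_nat q) (x + 1) y"
            using B pq(3) xy lt by (auto simp: shift_def Let_def)
          have p: "p = T x (y - 1)" using h1 by (simp add: Rs_def)
          have q: "q = T (x + 1) y" using h2 by (simp add: Rs_def)
          have "T x y = \<delta> (T x (y - 1)) (T (x + 1) y)"
            using oca_step[of "nat x" "nat y" \<delta> w] xy lt unfolding T_def
            by (simp add: nat_diff_distrib' nat_add_distrib)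
          then show ?thesis using pq(4) p q xy lt by (simp add: Rs_def n_def)
        next
          case 3
          then obtain q where q: "q \<notin> Qacc"
            "body = [HUn True UMin VX 0, HUn True UMax VY 0, HRel (to_nat q) 0 0]"
            "hd = HdBot" unfolding C3_def by auto
          have "x = 1" "y = n" "Rs (to_nat q) x y"
            using B q(2) xy by (auto simp: shift_def n_def)
          then have "q = T 1 n" by (simp add: Rs_def)
          moreover have "T 1 n = oca_state \<delta> w (length w) (length w - 1)"
            unfolding T_def n_def by (simp add: nat_diff_distrib')
          ultimately show ?thesis using q(1) acc by simp
        qed
      qed
    qed
    then show "w \<in> {w. w \<noteq> [] \<and> hmodels w \<Phi>}" using wne by auto
  next
    fix w assume "w \<in> {w. w \<noteq> [] \<and> hmodels w \<Phi>}"
    then have wne: "w \<noteq> []" and hm: "hmodels w \<Phi>" by auto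
    define n where "n = length w"
    from hm obtain Rs where RsH: "\<And>x y. 1 \<le> x \<Longrightarrow> x \<le> y \<Longrightarrow> y \<le> int n \<Longrightarrow>
        (\<forall>(body, hd) \<in> set \<Phi>. (\<forall>d \<in> set body. hatom_holds w Rs x y d) \<longrightarrow> hhead_holds Rs x y hd)"
      unfolding hmodels_def n_def by blast
    have Rin: "Rs (to_nat (oca_state \<delta> w y (y - x))) (int x) (int y)"
      if "1 \<le> x" "x \<le> y" "y \<le> n" for x y
      using that
    proof (induction "y - x" arbitrary: x y)
      case 0
      then have "x = y" by auto
      define s where "s = w ! (x - 1)"
      have mem: "([HEq, HUn True (UQ s) VX 0], HdRel (to_nat (Inl s :: 'a + nat))) \<in> set \<Phi>"
        unfolding \<Phi>_def C1_def using as by auto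
      have e: "nat (int x - 1) = x - 1" using 0 by auto
      have "(\<forall>d \<in> set [HEq, HUn True (UQ s) VX 0]. hatom_holds w Rs (int x) (int y) d) \<longrightarrow>
          hhead_holds Rs (int x) (int y) (HdRel (to_nat (Inl s :: 'a + nat)))"
        using bspec[OF RsH[of "int x" "int y"] mem] 0 by (simp add: n_def)
      then show ?case using 0 \<open>x = y\<close> e
        by (auto simp: shift_def s_def n_def)
    next
      case (Suc d)
      have lt: "x < y" using Suc by auto
      let ?p = "oca_state \<delta> w (y - 1) (y - 1 - x)"
      let ?q = "oca_state \<delta> w y (y - Suc x)"
      have pQ: "?p \<in> Q" and qQ: "?q \<in> Q" using oca_in_Q[OF QI Qd] Suc lt by auto
      have ih1: "Rs (to_nat ?p) (int x) (int (y - 1))" using Suc lt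
        by (intro Suc.hyps) auto
      have ih2: "Rs (to_nat ?q) (int (Suc x)) (int y)" using Suc lt
        by (intro Suc.hyps) auto
      have mem: "([HLess, HRel (to_nat ?p) 0 1, HRel (to_nat ?q) 1 0], HdRel (to_nat (\<delta> ?p ?q))) \<in> set \<Phi>"
        unfolding \<Phi>_def C2_def using pQ qQ qs by auto
      have "hatom_holds w Rs (int x) (int y) (HRel (to_nat ?p) 0 1)"
        using ih1 lt Suc by (auto simp: shift_def Let_def of_nat_diff n_def)
      moreover have "hatom_holds w Rs (int x) (int y) (HRel (to_nat ?q) 1 0)"
        using ih2 lt Suc by (auto simp: shift_def Let_def n_def add.commute)
      moreover have "(\<forall>d \<in> set [HLess, HRel (to_nat ?p) 0 1, HRel (to_nat ?q) 1 0]. hatom_holds w Rs (int x) (int y) d) \<longrightarrow>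
          hhead_holds Rs (int x) (int y) (HdRel (to_nat (\<delta> ?p ?q)))"
        using bspec[OF RsH[of "int x" "int y"] mem] Suc lt by simp
      ultimately have "Rs (to_nat (\<delta> ?p ?q)) (int x) (int y)"
        using lt by simp
      then show ?case using oca_step[of x y \<delta> w] Suc lt by simp
    qed
    have "oca_state \<delta> w n (n - 1) \<in> Qacc"
    proof (rule ccontr)
      assume na: "oca_state \<delta> w n (n - 1) \<notin> Qacc"
      let ?q = "oca_state \<delta> w n (n - 1)"
      have "?q \<in> Q" using oca_in_Q[OF QI Qd, of n] wne n_def by (simp add: Suc_le_eq)
      then have mem: "([HUn True UMin VX 0, HUn True UMax VY 0, HRel (to_nat ?q) 0 0], HdBot) \<in> set \<Phi>"
        unfolding \<Phi>_def C3_def using qs na by auto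
      have "Rs (to_nat ?q) 1 (int n)" using Rin[of 1 n] wne n_def by (simp add: Suc_le_eq)
      moreover have "(\<forall>d \<in> set [HUn True UMin VX 0, HUn True UMax VY 0, HRel (to_nat ?q) 0 0]. hatom_holds w Rs 1 (int n) d) \<longrightarrow>
          hhead_holds Rs 1 (int n) HdBot"
        using bspec[OF RsH[of 1 "int n"] mem] wne n_def by (simp add: Suc_le_eq)
      ultimately show False using wne n_def by (auto simp: shift_def Suc_le_eq)
    qed
    then show "w \<in> L" using Lw wne n_def by auto
  qed
  then show "L \<in> incl_ESO_HORN" unfolding incl_ESO_HORN_def by blast
qed

end
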